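(* Let $S\in\mathbb{R}^{nd\times p}$ be such that every $d\times d$ diagonal block of $SS^{\top}$ equals $I_d$. Then for every matrix $X\in\mathbb{R}^{nd\times nd}$, \[ \|X\circ SS^{\top}\|_{\mathrm{op}}\le\|X\|_{\mathrm{op}}, \] where $\circ$ denotes the Hadamard (entrywise) product. *)

theory Defs
  imports "HOL-Analysis.Analysis"
begin

definition hadamard :: "real^'n^'m \<Rightarrow> real^'n^'m \<Rightarrow> real^'n^'m" where
  "hadamard A B = (\<chi> i j. A $ i $ j * B $ i $ j)"

definition opnorm :: "real^'n^'m \<Rightarrow> real" where
  "opnorm A = onorm (\<lambda>v. A *v v)"

end

theory Submission
  imports Defs
begin

lemma key_identity:
  fixes S :: "real^'p::finite^'m::finite" and X :: "real^'m^'m" and w v :: "real^'m"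
  shows "w \<bullet> (hadamard X (S ** transpose S) *v v) =
    (\<Sum>k\<in>UNIV. (\<chi> r. w$r * S$r$k) \<bullet> (X *v (\<chi> r. v$r * S$r$k)))"
proof -
  have "w \<bullet> (hadamard X (S ** transpose S) *v v) =
     (\<Sum>r\<in>UNIV. \<Sum>c\<in>UNIV. \<Sum>k\<in>UNIV. w$r * (X$r$c * (S$r$k * S$c$k)) * v$c)"
    by (simp add: inner_vec_def hadamard_def matrix_vector_mult_def matrix_matrix_mult_def
        transpose_def sum_distrib_left sum_distrib_right mult.assoc)
  also have "\<dots> = (\<Sum>k\<in>UNIV. \<Sum>r\<in>UNIV. \<Sum>c\<in>UNIV. w$r * (X$r$c * (S$r$k * S$c$k)) * v$c)"
    by (subst sum.swap, subst (2) sum.swap, simp)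
  also have "\<dots> = (\<Sum>k\<in>UNIV. (\<chi> r. w$r * S$r$k) \<bullet> (X *v (\<chi> r. v$r * S$r$k)))"
    by (simp add: inner_vec_def matrix_vector_mult_def sum_distrib_left sum_distrib_right
        mult_ac)
  finally show ?thesis .
qed

lemma norm_sq_scaled:
  fixes S :: "real^'p::finite^'m::finite" and w :: "real^'m"
  assumes "\<And>r. (S ** transpose S) $ r $ r = 1"
  shows "(\<Sum>k\<in>UNIV. (norm (\<chi> r. w$r * S$r$k))^2) = (norm w)^2"
proof -
  have "(\<Sum>k\<in>UNIV. (norm (\<chi> r. w$r * S$r$k))^2) = (\<Sum>k\<in>UNIV. \<Sum>r\<in>UNIV. (w$r)^2 * (S$r$k)^2)"
    by (simp add: norm_vec_def L2_set_def power_mult_distrib sum_nonneg)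
  also have "\<dots> = (\<Sum>r\<in>UNIV. (w$r)^2 * (\<Sum>k\<in>UNIV. S$r$k * S$r$k))"
    by (subst sum.swap) (simp add: sum_distrib_left power2_eq_square)
  also have "\<dots> = (\<Sum>r\<in>UNIV. (w$r)^2)"
    using assms by (simp add: matrix_matrix_mult_def transpose_def)
  also have "\<dots> = (norm w)^2"
    by (simp add: norm_vec_def L2_set_def sum_nonneg)
  finally show ?thesis .
qed

theorem lemma8:
  fixes S :: "real^'p::finite^('n::finite \<times> 'd::finite)" and X :: "real^('n \<times> 'd)^('n \<times> 'd)"
  assumes "\<And>i a b. (S ** transpose S) $ (i, a) $ (i, b) = (if a = b then 1 else 0)"
  shows "opnorm (hadamard X (S ** transpose S)) \<le> opnorm X"
  unfolding opnorm_def
proof (rule onorm_le)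
  have diag: "\<And>r. (S ** transpose S) $ r $ r = 1"
    using assms by (metis prod.collapse)
  fix v :: "real^('n \<times> 'd)"
  define Y where "Y = hadamard X (S ** transpose S)"
  define w where "w = Y *v v"
  define U where "U = (\<lambda>k. (\<chi> r. w$r * S$r$k) :: real^('n \<times> 'd))"
  define V where "V = (\<lambda>k. (\<chi> r. v$r * S$r$k) :: real^('n \<times> 'd))"
  have bl: "bounded_linear ((*v) X)" by simp
  have "(norm w)^2 = w \<bullet> (Y *v v)" by (simp add: w_def power2_norm_eq_inner)
  also have "\<dots> = (\<Sum>k\<in>UNIV. U k \<bullet> (X *v V k))"
    unfolding Y_def U_def V_def by (rule key_identity)
  also have "\<dots> \<le> (\<Sum>k\<in>UNIV. onorm ((*v) X) * (\<bar>norm (U k)\<bar> * \<bar>norm (V k)\<bar>))"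
  proof (rule sum_mono)
    fix k
    have "U k \<bullet> (X *v V k) \<le> norm (U k) * norm (X *v V k)"
      by (rule norm_cauchy_schwarz)
    also have "\<dots> \<le> norm (U k) * (onorm ((*v) X) * norm (V k))"
      by (rule mult_left_mono[OF onorm[OF bl]]) simp
    finally show "U k \<bullet> (X *v V k) \<le> onorm ((*v) X) * (\<bar>norm (U k)\<bar> * \<bar>norm (V k)\<bar>)"
      by (simp add: mult_ac)
  qed
  also have "\<dots> = onorm ((*v) X) * (\<Sum>k\<in>UNIV. \<bar>norm (U k)\<bar> * \<bar>norm (V k)\<bar>)"
    by (simp add: sum_distrib_left)
  also have "\<dots> \<le> onorm ((*v) X) * (L2_set (\<lambda>k. norm (U k)) UNIV * L2_set (\<lambda>k. norm (V k)) UNIV)"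
    by (rule mult_left_mono[OF L2_set_mult_ineq onorm_pos_le[OF bl]])
  also have "L2_set (\<lambda>k. norm (U k)) UNIV = norm w"
    unfolding L2_set_def U_def using norm_sq_scaled[OF diag, of w] by simp
  also have "L2_set (\<lambda>k. norm (V k)) UNIV = norm v"
    unfolding L2_set_def V_def using norm_sq_scaled[OF diag, of v] by simp
  finally have *: "(norm w)^2 \<le> onorm ((*v) X) * (norm w * norm v)" .
  show "norm (Y *v v) \<le> onorm ((*v) X) * norm v"
  proof (cases "norm w = 0")
    case True
    then show ?thesis using onorm_pos_le[OF bl] by (simp add: w_def)
  next
    case False
    then have "norm w > 0" by simp
    with * have "norm w * norm w \<le> norm w * (onorm ((*v) X) * norm v)"
      by (simp add: power2_eq_square mult_ac)
    with \<open>norm w > 0\<close> show ?thesis by (simp add: w_def)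
  qed
qed

end
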